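(* For $k\ge4$, $\Phi_k(d_{\mathrm{lbd}}(k),x)>0$ for all $x\in[\frac12-\frac1{2^k},\frac12]$.
   Context: $\Phi_k(d,x)=-\log(1-x)-d(1-k^{-1}-d^{-1})\log(1-2x^k)+(d-1)\log(1-x^{k-1})$; $d_{\mathrm{lbd}}(4)=16.7$, $d_{\mathrm{lbd}}(k)=(2^{k-1}-2)k\log2$ for $k\ge5$. *)

theory Defs
  imports Complex_Main
begin

definition Phi :: "nat \<Rightarrow> real \<Rightarrow> real \<Rightarrow> real" where
  "Phi k d x = - ln (1 - x) - d * (1 - 1 / real k - 1 / d) * ln (1 - 2 * x ^ k)
              + (d - 1) * ln (1 - x ^ (k - 1))"

definition d_lbd :: "nat \<Rightarrow> real" where
  "d_lbd k = (if k = 4 then 16.7 else (2 ^ (k - 1) - 2) * real k * ln 2)"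

end

theory Submission
  imports Defs
begin

lemma d_upper2: "0 \<le> z \<Longrightarrow> z < (1::real) \<Longrightarrow> DERIV (\<lambda>z::real. -z - z^2/2 - ln (1-z)) z :> z^2/(1-z)"
  apply (rule derivative_eq_intros refl | simp)+
  apply (subgoal_tac "1 - z \<noteq> 0")
  apply (simp add: divide_simps power2_eq_square)
  apply (simp add: algebra_simps)
  by auto

lemma d_lower3: "0 \<le> z \<Longrightarrow> z < (1::real) \<Longrightarrow> DERIV (\<lambda>z::real. ln (1-z) + z + z^2/2 + z^3/(3*(1-z))) z :> z^3/(3*(1-z)^2)"
  apply (rule derivative_eq_intros refl | simp)+
  apply (subgoal_tac "1 - z \<noteq> 0" "3 - 3*z \<noteq> 0")
  apply (simp add: divide_simps power2_eq_square power3_eq_cube)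
  apply (simp add: algebra_simps)
  by auto

lemma d_ln2: "0 \<le> z \<Longrightarrow> z < (1::real) \<Longrightarrow> DERIV (\<lambda>z::real. ln (1+z) - ln (1-z) - 2*z - 2*z^3/3) z :> 2*z^4/(1-z^2)"
  apply (rule derivative_eq_intros refl | simp)+
  apply (subgoal_tac "1 - z \<noteq> 0" "1 + z \<noteq> 0" "1 - z^2 \<noteq> 0")
  apply (simp add: divide_simps power2_eq_square power3_eq_cube)
  apply (simp add: algebra_simps power_def)
  using abs_square_less_1[of z] by auto

lemma ln_upper2:
  fixes u :: real assumes "0 \<le> u" "u < 1"
  shows "ln (1-u) \<le> -u - u^2/2"
proof -
  let ?f = "\<lambda>z::real. -z - z^2/2 - ln (1-z)"
  have "?f 0 \<le> ?f u"
  proof (rule DERIV_nonneg_imp_nondecreasing[OF assms(1)])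
    fix z :: real assume z: "0 \<le> z" "z \<le> u"
    have "DERIV ?f z :> z^2/(1-z)" using z assms by (intro d_upper2) auto
    moreover have "z^2/(1-z) \<ge> 0" using z assms by simp
    ultimately show "\<exists>y. DERIV ?f z :> y \<and> y \<ge> 0" by blast
  qed
  thus ?thesis by simp
qed

lemma ln_lower3:
  fixes v :: real assumes "0 \<le> v" "v < 1"
  shows "-v - v^2/2 - v^3/(3*(1-v)) \<le> ln (1-v)"
proof -
  let ?f = "\<lambda>z::real. ln (1-z) + z + z^2/2 + z^3/(3*(1-z))"
  have "?f 0 \<le> ?f v"
  proof (rule DERIV_nonneg_imp_nondecreasing[OF assms(1)])
    fix z :: real assume z: "0 \<le> z" "z \<le> v"
    have "DERIV ?f z :> z^3/(3*(1-z)^2)" using z assms by (intro d_lower3) auto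
    moreover have "z^3/(3*(1-z)^2) \<ge> 0" using z by simp
    ultimately show "\<exists>y. DERIV ?f z :> y \<and> y \<ge> 0" by blast
  qed
  thus ?thesis by simp
qed

lemma ln2_ge: "(0.69::real) \<le> ln 2"
proof -
  let ?f = "\<lambda>z::real. ln (1+z) - ln (1-z) - 2*z - 2*z^3/3"
  have "?f 0 \<le> ?f (1/3)"
  proof (rule DERIV_nonneg_imp_nondecreasing[of 0 "1/3"])
    show "(0::real) \<le> 1/3" by simp
  next
    fix z :: real assume z: "0 \<le> z" "z \<le> 1/3"
    have "DERIV ?f z :> 2*z^4/(1-z^2)" using z by (intro d_ln2) auto
    moreover have "2*z^4/(1-z^2) \<ge> 0" using z abs_square_less_1[of z] by simp
    ultimately show "\<exists>y. DERIV ?f z :> y \<and> y \<ge> 0" by blast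
  qed
  moreover have "ln (1 + 1/3) - ln (1 - 1/3) = ln (2::real)"
  proof -
    have "ln (4/3) - ln (2/3) = ln ((4/3) / (2/3::real))" by (rule ln_divide_pos[symmetric]) auto
    thus ?thesis by simp
  qed
  ultimately show ?thesis by (simp add: power3_eq_cube)
qed
lemma pow_P1:
  fixes a :: real assumes "0 \<le> a" "a \<le> 1"
  shows "(real n + 1) * (1 - a) * a^n \<le> 1 - a^(Suc n)"
proof (induction n)
  case 0 then show ?case by simp
next
  case (Suc n)
  have "a^(Suc n) \<le> a^n" using assms by (intro power_decreasing) auto
  hence "(real n + 1) * (1 - a) * a^(Suc n) \<le> (real n + 1) * (1 - a) * a^n"
    using assms by (intro mult_left_mono) auto
  hence "(real (Suc n) + 1) * (1 - a) * a^(Suc n) \<le> (1 - a^(Suc n)) + (1-a) * a^(Suc n)"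
    using Suc by (simp add: algebra_simps)
  also have "\<dots> = 1 - a^(Suc (Suc n))" by (simp add: algebra_simps)
  finally show ?case .
qed

lemma pow_P2:
  fixes y :: real assumes "0 \<le> y" "y \<le> 1"
  shows "(real m + 1) * (real m + 2) * y^2 * (1-y)^m / 2 \<le> 1 - (1-y)^(Suc m) * (1 + (real m + 1) * y)"
proof (induction m)
  case 0 then show ?case by (simp add: algebra_simps power2_eq_square)
next
  case (Suc m)
  let ?g = "(1-y)^(Suc m) * (1 + (real m + 1) * y)"
  have e: "1 - (1-y)^(Suc (Suc m)) * (1 + (real (Suc m) + 1) * y) = (1-y)*(1 - ?g) + y * (1 - (1-y)^(Suc (Suc m)))"
    by (simp add: algebra_simps)
  have h1: "(1-y) * ((real m + 1) * (real m + 2) * y^2 * (1-y)^m / 2) \<le> (1-y)*(1 - ?g)"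
    using Suc assms by (intro mult_left_mono) auto
  have h2: "(real (Suc m) + 1) * (1 - (1-y)) * (1-y)^(Suc m) \<le> 1 - (1-y)^(Suc (Suc m))"
    using pow_P1[of "1-y" "Suc m"] assms by simp
  have h3: "y * ((real (Suc m) + 1) * y * (1-y)^(Suc m)) \<le> y * (1 - (1-y)^(Suc (Suc m)))"
    using h2 assms by (intro mult_left_mono) auto
  have "(real (Suc m) + 1) * (real (Suc m) + 2) * y^2 * (1-y)^(Suc m) / 2
        = (1-y) * ((real m + 1) * (real m + 2) * y^2 * (1-y)^m / 2) + y * ((real (Suc m) + 1) * y * (1-y)^(Suc m))"
  proof -
    have *: "(1-y)^(Suc m) = (1-y) * (1-y)^m" by simp
    show ?thesis unfolding * by (simp add: field_simps power2_eq_square)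
  qed
  also have "\<dots> \<le> (1-y)*(1 - ?g) + y * (1 - (1-y)^(Suc (Suc m)))" using h1 h3 by linarith
  also have "\<dots> = 1 - (1-y)^(Suc (Suc m)) * (1 + (real (Suc m) + 1) * y)" using e by simp
  finally show ?case .
qed

lemma two_pow_ge1: "k \<ge> 5 \<Longrightarrow> 2 * real k + 4 \<le> 2^(k-1)"
proof (induction k rule: dec_induct)
  case base then show ?case by simp
next
  case (step n)
  have "(2::real)^(Suc n - 1) = 2 * 2^(n-1)" using step(1) by (cases n) auto
  then show ?case using step by simp
qed

lemma two_pow_ge2: "k \<ge> 5 \<Longrightarrow> 8 * real k - 24 \<le> 2^(k-1)"
proof (induction k rule: dec_induct)
  case base then show ?case by simp
next
  case (step n)
  have "(2::real)^(Suc n - 1) = 2 * 2^(n-1)" using step(1) by (cases n) auto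
  then show ?case using step by simp
qed
lemma final_ineq:
  fixes k N t L :: real
  assumes k5: "5 \<le> k" and N1: "2*k + 4 \<le> N" and N2: "8*k - 24 \<le> N"
    and t0: "0 \<le> t" and t1: "t \<le> 1" and L0: "0.69 \<le> L"
  shows "0 < N*(3*L - 2*t) + 2*L + L*(k-1)*k*t^2 + 2*t - 2*t*(k-1)*L - 2*k*L/3
             - (L*(k-1)*k*(k-2)*t^3 + 4*L*(k-1)^2*t^2 + 2*(k-1)*t^2)/N"
proof -
  have Npos: "N > 0" using N1 k5 by linarith
  have "L*k*(k-2)*t \<le> L*k*(k-2)" using t1 t0 k5 L0 by (intro mult_left_le) auto
  hence in1: "L*k*(k-2)*t + 4*L*(k-1) + 2 \<le> L*k*N/2"
  proof -
    assume a: "L*k*(k-2)*t \<le> L*k*(k-2)"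
    have "L*k*(2*k+4) \<le> L*k*N" using N1 L0 k5 by (intro mult_left_mono) auto
    thus ?thesis using a L0 by (simp add: algebra_simps)
  qed
  have num: "L*(k-1)*k*(k-2)*t^3 + 4*L*(k-1)^2*t^2 + 2*(k-1)*t^2
             = ((k-1)*t^2) * (L*k*(k-2)*t + 4*L*(k-1) + 2)"
    by (simp add: algebra_simps power2_eq_square power3_eq_cube)
  have "((k-1)*t^2) * (L*k*(k-2)*t + 4*L*(k-1) + 2) \<le> ((k-1)*t^2) * (L*k*N/2)"
    using in1 k5 by (intro mult_left_mono) auto
  hence Q: "(L*(k-1)*k*(k-2)*t^3 + 4*L*(k-1)^2*t^2 + 2*(k-1)*t^2)/N \<le> L*(k-1)*k*t^2/2"
    using Npos unfolding num by (simp add: divide_simps algebra_simps)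
  have e: "L*(k-1)*k*t^2/2 + 2*L - 2*t*(k-1)*L = (L/2)*((k-1)*t-2)^2 + L*(k-1)*t^2/2"
    by (simp add: field_simps power2_eq_square)
  have "0 \<le> (L/2)*((k-1)*t-2)^2" using L0 by simp
  moreover have "0 \<le> L*(k-1)*t^2/2" using L0 k5 by simp
  ultimately have sq: "0 \<le> L*(k-1)*k*t^2/2 + 2*L - 2*t*(k-1)*L" unfolding e by linarith
  have lin: "N*(3*L - 2*t) + 2*t \<ge> N*(3*L-2) + 2"
  proof -
    have "0 \<le> 2*(N-1)*(1-t)" using Npos N1 k5 t1 by (intro mult_nonneg_nonneg) auto
    thus ?thesis by (simp add: algebra_simps)
  qed
  have h1: "(8*k-24)*(3*L-2) \<le> N*(3*L-2)" using N2 L0 by (intro mult_right_mono) auto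
  have h2: "0 \<le> (k-5)*(70*L/3-16)" using k5 L0 by (intro mult_nonneg_nonneg) auto
  have e1: "(8*k-24)*(3*L-2) = 24*(k*L) - 16*k - 72*L + 48" by (simp add: algebra_simps)
  have e2: "N*(3*L-2) = 3*(N*L) - 2*N" by (simp add: algebra_simps)
  have e3: "(k-5)*(70*L/3-16) = 70/3*(k*L) - 16*k - 350/3*L + 80" by (simp add: field_simps)
  have e4: "2*k*L/3 = 2/3*(k*L)" by simp
  have L0': "69/100 \<le> L" using L0 by simp
  have c: "N*(3*L-2) + 2 - 2*k*L/3 > 0" using h1 h2 L0' unfolding e1 e2 e3 e4 by linarith
  show ?thesis using Q sq lin c by linarith
qed
lemma main_ge5:
  fixes k :: nat and x :: real
  assumes k5: "k \<ge> 5" and xl: "1/2 - 1/2^k \<le> x" and xr: "x \<le> 1/2"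
  shows "Phi k ((2^(k-1) - 2) * real k * ln 2) x > 0"
proof -
  define L where "L = ln (2::real)"
  define N where "N = (2::real)^(k-1)"
  define y where "y = 1 - 2*x"
  define t where "t = N*y"
  define n where "n = real k - 1"
  define w where "w = (1-y)^(k-1)"
  define d where "d = (N - 2) * real k * L"
  define A where "A = (N-2)*n*L - 1"
  define B where "B = d - 1"
  define u where "u = (1-y)*w/N"
  define v where "v = w/N"
  have L0: "0.69 \<le> L" unfolding L_def by (rule ln2_ge)
  have L1: "L < 1" unfolding L_def by (rule ln_2_less_1)
  have kSuc: "k = Suc (k-1)" using k5 by simp
  have n_eq: "real (k-1) = n" unfolding n_def using k5 by (simp add: of_nat_diff)
  have m_eq: "real (k-2) = n - 1" unfolding n_def using k5 by (simp add: of_nat_diff)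
  have km: "k - 1 = Suc (k-2)" using k5 by simp
  have N1: "2 * real k + 4 \<le> N" unfolding N_def using two_pow_ge1[OF k5] .
  have N2: "8 * real k - 24 \<le> N" unfolding N_def using two_pow_ge2[OF k5] .
  have k5r: "5 \<le> real k" using k5 by simp
  have N16: "16 \<le> N" using N2 k5r by linarith
  have Npos: "N > 0" using N16 by simp
  have pk: "(2::real)^k = 2*N" unfolding N_def by (subst kSuc) simp
  have y0: "0 \<le> y" unfolding y_def using xr by simp
  have y1: "y \<le> 1/N" unfolding y_def using xl pk by (simp add: field_simps)
  have t0: "0 \<le> t" unfolding t_def using y0 Npos by simp
  have t1: "t \<le> 1" unfolding t_def using y1 Npos by (simp add: field_simps)
  have yle1: "y \<le> 1/16" using y1 N16 by (smt (verit) frac_le)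
  have y_t: "y = t/N" unfolding t_def using Npos by simp
  have w0: "0 \<le> w" unfolding w_def using yle1 by simp
  have w1: "w \<le> 1" unfolding w_def using yle1 y0 by (simp add: power_le_one)
  have x_eq: "x = (1-y)/2" unfolding y_def by simp
  have xv: "x^(k-1) = v" unfolding v_def w_def N_def x_eq by (simp add: power_divide)
  have xu: "2*x^k = u"
  proof -
    have "2*x^k = 2*x * x^(k-1)" by (subst kSuc) simp
    also have "\<dots> = (1-y) * v" using xv by (simp add: y_def)
    finally show ?thesis unfolding u_def v_def by simp
  qed
  have n4: "4 \<le> n" unfolding n_def using k5r by simp
  have dd: "(2^(k-1) - 2) * real k * ln 2 = d" unfolding d_def N_def L_def by simp
  have A56: "56 \<le> (N-2)*n" using mult_mono[of 14 "N-2" 4 n] N16 n4 by simp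
  have "56 * 0.69 \<le> ((N-2)*n)*L" using mult_mono[OF A56 L0] A56 by simp
  hence A1: "1 \<le> (N-2)*n*L" by simp
  have A0: "0 \<le> A" unfolding A_def using A1 by simp
  have AB: "B = A + (N-2)*L" unfolding B_def A_def d_def n_def by (simp add: algebra_simps)
  have NL0: "0 \<le> (N-2)*L" using N16 L0 by simp
  have B0: "0 \<le> B" using AB A0 NL0 by linarith
  have d0: "d \<noteq> 0" using AB A0 NL0 unfolding B_def by linarith
  have dA: "d * (1 - 1/real k - 1/d) = A"
    using d0 k5r unfolding A_def d_def n_def by (simp add: field_simps)
  have Phi_eq: "Phi k ((2^(k-1) - 2) * real k * ln 2) x = - ln(1-x) - A * ln(1-u) + B * ln(1-v)"
    unfolding Phi_def dd dA xu xv B_def by simp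
  have v0: "0 \<le> v" unfolding v_def using w0 Npos by simp
  have v1: "v \<le> 1/N" unfolding v_def using w1 Npos by (simp add: divide_right_mono)
  have Ninv: "1/N \<le> 1/16" using N16 by (intro divide_left_mono) auto
  have vlt: "v < 1" using v1 Ninv by linarith
  have u0: "0 \<le> u" unfolding u_def using w0 Npos yle1 by simp
  have uv: "u \<le> v"
  proof -
    have "(1-y)*w \<le> w" using w0 y0 by (simp add: algebra_simps)
    thus ?thesis unfolding u_def v_def using Npos by (simp add: divide_right_mono)
  qed
  have ult: "u < 1" using uv vlt by simp
  have T1: "L - y \<le> - ln (1-x)"
  proof -
    have "1 - x = (1+y)/2" unfolding y_def by simp
    hence "ln (1-x) = ln ((1+y)/2)" by (rule arg_cong)
    also have "\<dots> = ln (1+y) - L" unfolding L_def using y0 by (intro ln_divide_pos) auto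
    finally have "ln (1-x) = ln (1+y) - L" .
    moreover have "ln (1+y) \<le> y" using y0 by (intro ln_add_one_self_le_self) 
    ultimately show ?thesis by simp
  qed
  have T2: "A*(u + u^2/2) \<le> - (A * ln (1-u))"
    using mult_left_mono[OF ln_upper2[OF u0 ult] A0] by (simp add: algebra_simps)
  have T3: "B*(-v - v^2/2 - v^3/(3*(1-v))) \<le> B * ln (1-v)"
    using mult_left_mono[OF ln_lower3[OF v0 vlt] B0] .
  define I1 where "I1 = A*u - B*v"
  define I2 where "I2 = A*u^2/2 - B*v^2/2"
  define I3 where "I3 = B*v^3/(3*(1-v))"
  have R_eq: "L - y + A*(u + u^2/2) + B*(-v - v^2/2 - v^3/(3*(1-v))) = L - y + I1 + I2 - I3"
    unfolding I1_def I2_def I3_def by (simp add: algebra_simps)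
  have PhiR: "Phi k ((2^(k-1) - 2) * real k * ln 2) x \<ge> L - y + I1 + I2 - I3"
    using T1 T2 T3 R_eq Phi_eq by linarith
  have kn: "real k = n + 1" unfolding n_def by simp
  have I1_eq: "I1 = L*(1 - w*(1+n*y)) - L + (2*L/N)*(w*(1+n*y)) + y*w/N"
    unfolding I1_def A_def B_def d_def u_def v_def kn using Npos by (simp add: field_simps)
  have bern: "\<And>j. 1 - real j * y \<le> (1-y)^j"
  proof -
    fix j :: nat
    have "1 + real j * (-y) \<le> (1 + (-y))^j" using yle1 by (intro Bernoulli_inequality) auto
    thus "1 - real j * y \<le> (1-y)^j" by simp
  qed
  have wb: "1 - n*y \<le> w" unfolding w_def using bern[of "k-1"] n_eq by simp
  have S6: "L*(n*(n+1)*y^2*(1-(n-1)*y)/2) \<le> L*(1 - w*(1+n*y))"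
  proof -
    have P2: "(real (k-2) + 1) * (real (k-2) + 2) * y^2 * (1-y)^(k-2) / 2 \<le> 1 - (1-y)^(Suc (k-2)) * (1 + (real (k-2) + 1) * y)"
      using pow_P2[of y "k-2"] y0 yle1 by simp
    hence P2': "n*(n+1)*y^2*(1-y)^(k-2)/2 \<le> 1 - w*(1+n*y)"
      unfolding m_eq km[symmetric] w_def by (simp add: algebra_simps)
    have "1 - (n-1)*y \<le> (1-y)^(k-2)" using bern[of "k-2"] m_eq by simp
    hence "n*(n+1)*y^2/2 * (1 - (n-1)*y) \<le> n*(n+1)*y^2/2 * (1-y)^(k-2)"
      using n4 by (intro mult_left_mono) auto
    hence "n*(n+1)*y^2*(1-(n-1)*y)/2 \<le> n*(n+1)*y^2*(1-y)^(k-2)/2" by simp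
    hence "n*(n+1)*y^2*(1-(n-1)*y)/2 \<le> 1 - w*(1+n*y)" using P2' by linarith
    thus ?thesis using L0 by (intro mult_left_mono) auto
  qed
  have S7a: "(2*L/N)*(1 - n^2*y^2) \<le> (2*L/N)*(w*(1+n*y))"
  proof -
    have "(1-n*y)*(1+n*y) \<le> w*(1+n*y)" using wb n4 y0 by (intro mult_right_mono) auto
    hence "1 - n^2*y^2 \<le> w*(1+n*y)" by (simp add: algebra_simps power2_eq_square)
    thus ?thesis using L0 Npos by (intro mult_left_mono) auto
  qed
  have S7b: "y*(1-n*y)/N \<le> y*w/N"
    using wb y0 Npos by (intro divide_right_mono mult_left_mono) auto
  define C where "C = A*(1-y)^2 - B"
  have I2_eq: "I2 = w^2/(2*N^2) * C"
    unfolding I2_def C_def u_def v_def using Npos by (simp add: field_simps power2_eq_square)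
  have C_eq: "C = -(N-2)*L - A*(y*(2-y))"
    unfolding C_def AB by (simp add: algebra_simps power2_eq_square)
  have Ay0: "0 \<le> A*(y*(2-y))" using A0 y0 yle1 by simp
  have Ay1: "A*(y*(2-y)) \<le> ((N-2)*n*L)*(2*y)"
  proof -
    have "A \<le> (N-2)*n*L" unfolding A_def by simp
    moreover have "y*(2-y) \<le> 2*y" using y0 by (simp add: algebra_simps)
    moreover have "0 \<le> y*(2-y)" using y0 yle1 by simp
    ultimately show ?thesis using A0 by (rule_tac mult_mono) auto
  qed
  have C0: "C \<le> 0" using C_eq Ay0 NL0 by linarith
  have C1: "-(N-2)*L - ((N-2)*n*L)*(2*y) \<le> C" using C_eq Ay1 by linarith
  have I2b: "(-(N-2)*L - ((N-2)*n*L)*(2*y))/(2*N^2) \<le> I2"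
  proof -
    have "w^2 \<le> 1" using w0 w1 by (simp add: power_le_one)
    hence "C \<le> w^2 * C" using C0 w0 by (simp add: mult_le_cancel_right1)
    hence "C/(2*N^2) \<le> w^2 * C/(2*N^2)" using Npos by (intro divide_right_mono) auto
    moreover have "(-(N-2)*L - ((N-2)*n*L)*(2*y))/(2*N^2) \<le> C/(2*N^2)"
      using C1 Npos by (intro divide_right_mono) auto
    ultimately show ?thesis unfolding I2_eq by simp
  qed
  have I3b: "I3 \<le> (n+1)*L/(3*N^2)"
  proof -
    have v3: "v^3 \<le> (1/N)^3" using v0 v1 by (intro power_mono) auto
    have omv: "(N-1)/N \<le> 1 - v" using v1 Npos by (simp add: field_simps)
    have omv0: "0 < (N-1)/N" using N16 by simp
    have q: "v^3/(3*(1-v)) \<le> (1/N)^3/(3*((N-1)/N))"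
    proof (rule frac_le)
      show "0 \<le> (1/N)^3" using Npos by simp
      show "v^3 \<le> (1/N)^3" by (rule v3)
      show "0 < 3*((N-1)/N)" using omv0 by (rule mult_pos_pos[rotated]) simp
      show "3*((N-1)/N) \<le> 3*(1-v)" using omv by (rule mult_left_mono) simp
    qed
    have q2: "(1/N)^3/(3*((N-1)/N)) = 1/(3*N^2*(N-1))"
      using Npos N16 by (simp add: field_simps power2_eq_square power3_eq_cube)
    have Bup: "B \<le> (N-1)*(n+1)*L" unfolding B_def d_def kn using L0 n4 by (simp add: algebra_simps)
    have "I3 = B * (v^3/(3*(1-v)))" unfolding I3_def by simp
    also have "\<dots> \<le> ((N-1)*(n+1)*L) * (1/(3*N^2*(N-1)))"
      using q q2 Bup B0 v0 vlt by (intro mult_mono) auto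
    also have "\<dots> = (n+1)*L/(3*N^2)" using N16 by (simp add: field_simps)
    finally show ?thesis .
  qed
  define LB where "LB = -y + L*(n*(n+1)*y^2*(1-(n-1)*y)/2) + (2*L/N)*(1 - n^2*y^2) + y*(1-n*y)/N
     + (-(N-2)*L - ((N-2)*n*L)*(2*y))/(2*N^2) - (n+1)*L/(3*N^2)"
  have RLB: "LB \<le> L - y + I1 + I2 - I3"
    unfolding LB_def using I1_eq S6 S7a S7b I2b I3b by linarith
  define E where "E = N*(3*L - 2*t) + 2*L + L*((n+1)-1)*(n+1)*t^2 + 2*t - 2*t*((n+1)-1)*L - 2*(n+1)*L/3
             - (L*((n+1)-1)*(n+1)*((n+1)-2)*t^3 + 4*L*((n+1)-1)^2*t^2 + 2*((n+1)-1)*t^2)/N"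
  have E0: "0 < E" unfolding E_def
    using final_ineq[of "n+1" N t L] k5r N1 N2 t0 t1 L0 unfolding kn by simp
  have LBeq: "LB = (E + 4*t*n*L/N)/(2*N^2)"
    unfolding LB_def E_def y_t using Npos by (simp add: field_simps power2_eq_square power3_eq_cube)
  have "0 \<le> 4*t*n*L/N" using t0 n4 L0 Npos by simp
  hence "0 < LB" unfolding LBeq using E0 Npos by simp
  thus ?thesis using PhiR RLB by linarith
qed
lemma main4:
  fixes x :: real
  assumes xl: "1/2 - 1/2^4 \<le> x" and xr: "x \<le> 1/2"
  shows "Phi 4 16.7 x > 0"
proof -
  define L where "L = ln (2::real)"
  define y where "y = 1 - 2*x"
  define A :: real where "A = 11.525"
  define B :: real where "B = 15.7"
  define u where "u = (1-y)^4/8"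
  define v where "v = (1-y)^3/8"
  have L0: "0.69 \<le> L" unfolding L_def by (rule ln2_ge)
  have y0: "0 \<le> y" unfolding y_def using xr by simp
  have y1: "y \<le> 1/8" unfolding y_def using xl by simp
  have x_eq: "x = (1-y)/2" unfolding y_def by simp
  have xv: "x^(4-1) = v" unfolding v_def x_eq by (simp add: power_divide)
  have xu: "2*x^4 = u" unfolding u_def x_eq by (simp add: power_divide)
  have dA: "16.7 * (1 - 1/real (4::nat) - 1/16.7) = A" unfolding A_def by simp
  have Phi_eq: "Phi 4 16.7 x = - ln(1-x) - A * ln(1-u) + B * ln(1-v)"
    unfolding Phi_def dA xu xv B_def by simp
  have A0: "0 \<le> A" unfolding A_def by simp
  have B0: "0 \<le> B" unfolding B_def by simp
  have w0: "0 \<le> (1-y)" "1-y \<le> 1" using y0 y1 by auto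
  have v0: "0 \<le> v" unfolding v_def using w0 by simp
  have v1: "v \<le> 1/8" unfolding v_def using w0 by (simp add: power_le_one)
  have vlt: "v < 1" using v1 by simp
  have u0: "0 \<le> u" unfolding u_def using w0 by simp
  have u1: "u \<le> 1/8" unfolding u_def using w0 by (simp add: power_le_one)
  have ult: "u < 1" using u1 by simp
  have T1: "L - y \<le> - ln (1-x)"
  proof -
    have "1 - x = (1+y)/2" unfolding y_def by simp
    hence "ln (1-x) = ln ((1+y)/2)" by (rule arg_cong)
    also have "\<dots> = ln (1+y) - L" unfolding L_def using y0 by (intro ln_divide_pos) auto
    finally have "ln (1-x) = ln (1+y) - L" .
    moreover have "ln (1+y) \<le> y" using y0 by (intro ln_add_one_self_le_self)
    ultimately show ?thesis by simp
  qed
  have T2: "A*(u + u^2/2) \<le> - (A * ln (1-u))"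
    using mult_left_mono[OF ln_upper2[OF u0 ult] A0] by (simp add: algebra_simps)
  have T3: "B*(-v - v^2/2 - v^3/(3*(1-v))) \<le> B * ln (1-v)"
    using mult_left_mono[OF ln_lower3[OF v0 vlt] B0] .
  define I3 where "I3 = B*v^3/(3*(1-v))"
  define P where "P = - y + A*(u + u^2/2) - B*(v + v^2/2)"
  have R_eq: "L - y + A*(u + u^2/2) + B*(-v - v^2/2 - v^3/(3*(1-v))) = L + P - I3"
    unfolding I3_def P_def by (simp add: algebra_simps)
  have I3b: "I3 \<le> 15.7/1344"
  proof -
    have v3: "v^3 \<le> (1/8)^3" using v0 v1 by (intro power_mono) auto
    have q: "v^3/(3*(1-v)) \<le> (1/8)^3/(3*(7/8))"
    proof (rule frac_le)
      show "0 \<le> ((1::real)/8)^3" by simp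
      show "v^3 \<le> (1/8)^3" by (rule v3)
      show "0 < 3*((7::real)/8)" by simp
      show "3*((7::real)/8) \<le> 3*(1-v)" using v1 by simp
    qed
    have "I3 = B * (v^3/(3*(1-v)))" unfolding I3_def by simp
    also have "\<dots> \<le> B * ((1/8)^3/(3*(7/8)))" using q B0 by (rule mult_left_mono)
    also have "\<dots> = 15.7/1344" unfolding B_def by (simp add: power3_eq_cube)
    finally show ?thesis .
  qed
  have P_eq: "P = -2839/5120 - 55/64*y + (y^2*(55/16 - 4089/640*y) + y^4*(15113/2560 - 689/160*y)
                + y^6*(307/128 - 461/640*y) + 461/5120*y^8)"
    unfolding P_def A_def B_def u_def v_def by (simp add: field_simps) algebra
  have g1: "0 \<le> y^2*(55/16 - 4089/640*y)" using y0 y1 by (intro mult_nonneg_nonneg) auto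
  have g2: "0 \<le> y^4*(15113/2560 - 689/160*y)" using y0 y1 by (intro mult_nonneg_nonneg) auto
  have g3: "0 \<le> y^6*(307/128 - 461/640*y)" using y0 y1 by (intro mult_nonneg_nonneg) auto
  have g4: "0 \<le> 461/5120*y^8" using y0 by simp
  have "-2839/5120 - 55/64*y \<le> P" unfolding P_eq using g1 g2 g3 g4 by linarith
  hence "0 < L + P - I3" using I3b L0 y1 by simp
  thus ?thesis using T1 T2 T3 R_eq Phi_eq by linarith
qed
theorem lemma3p5:
  fixes k :: nat and x :: real
  assumes "k \<ge> 4"
    and "1/2 - 1 / 2 ^ k \<le> x" and "x \<le> 1/2"
  shows "Phi k (d_lbd k) x > 0"
proof (cases "k = 4")
  case True
  then show ?thesis using main4 assms by (simp add: d_lbd_def)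
next
  case False
  then have "k \<ge> 5" using assms(1) by simp
  then show ?thesis using main_ge5 assms False by (simp add: d_lbd_def)
qed

end
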